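(* Let $g,f$ be constraints such that $f$ is non-trivial and $\deg(g)\le\deg(f)$. Then there exist $M$, constraints $f_1,\dots,f_M$ each expressible by $f$ with constants, index tuples $(j_i^1,\dots,j_i^{\mathrm{ar}(f_i)})$ with entries in $[\mathrm{ar}(g)]$, and rationals $\alpha_1,\dots,\alpha_M\in\mathbb{Q}$ such that for all $x\in\{0,1\}^{\mathrm{ar}(g)}$, $$g(x_1,\dots,x_{\mathrm{ar}(g)})=\sum_{i=1}^M\alpha_i\cdot f_i(x_{j_i^1},\dots,x_{j_i^{\mathrm{ar}(f_i)}}).$$
   Context: A $k$-ary constraint is $f\colon\{0,1\}^k\to\{0,1\}$ ($k=\mathrm{ar}(f)$), trivial if it is constant. Its characteristic polynomial $P_f$ is the unique multilinear polynomial over $\mathbb{R}$ in $k$ variables with $P_f(x)=f(x)$ for all $x\in\{0,1\}^k$; $\deg(f)=\deg(P_f)$. A $d$-ary constraint $h$ is expressible by $f$ with constants if $h(x_1,\dots,x_d)=f(\xi_1,\dots,\xi_k)$ identically, where each $\xi_j$ is either a variable $x_i$ for some $i\in[d]$ or one of the constants $0,1$. *)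

theory Defs
  imports Complex_Main
begin

text \<open>A constraint of arity k is a pair (k, f) with f :: bool list \<Rightarrow> bool, where f
  is only meaningful on lists of length k (points of {0,1}^k, True = 1).\<close>
type_synonym constraint = "nat \<times> (bool list \<Rightarrow> bool)"

definition ar :: "constraint \<Rightarrow> nat" where "ar c = fst c"
definition cfun :: "constraint \<Rightarrow> bool list \<Rightarrow> bool" where "cfun c = snd c"

definition trivial :: "constraint \<Rightarrow> bool" where
  "trivial c \<longleftrightarrow> (\<exists>b. \<forall>x. length x = ar c \<longrightarrow> cfun c x = b)"

text \<open>Multilinear polynomial in k variables: coefficient function on subsets S of {0..<k},
  representing sum over S of c S times the product of x_i for i in S.\<close>
definition is_char_poly :: "constraint \<Rightarrow> (nat set \<Rightarrow> real) \<Rightarrow> bool" where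
  "is_char_poly f c \<longleftrightarrow>
     (\<forall>S. \<not> S \<subseteq> {..<ar f} \<longrightarrow> c S = 0) \<and>
     (\<forall>x. length x = ar f \<longrightarrow>
        of_bool (cfun f x) = (\<Sum>S\<in>Pow {..<ar f}. c S * (\<Prod>i\<in>S. of_bool (x ! i))))"

definition char_poly :: "constraint \<Rightarrow> nat set \<Rightarrow> real" where
  "char_poly f = (THE c. is_char_poly f c)"

definition deg :: "constraint \<Rightarrow> nat" where
  "deg f = Max ({0} \<union> card ` {S. char_poly f S \<noteq> 0})"

text \<open>h of arity d is expressible by f with constants: h(x) = f(xi_1..xi_k), each xi_j either a
  variable x_i (Inl i, i < d) or a constant (Inr b).\<close>
definition expressible :: "constraint \<Rightarrow> constraint \<Rightarrow> bool" where
  "expressible h f \<longleftrightarrow>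
     (\<exists>\<xi> :: (nat + bool) list. length \<xi> = ar f \<and>
        (\<forall>i. Inl i \<in> set \<xi> \<longrightarrow> i < ar h) \<and>
        (\<forall>x. length x = ar h \<longrightarrow>
           cfun h x = cfun f (map (\<lambda>e. case e of Inl i \<Rightarrow> x ! i | Inr b \<Rightarrow> b) \<xi>)))"

end

theory Submission
  imports Defs
begin



definition pt :: "nat \<Rightarrow> nat set \<Rightarrow> bool list" where
  "pt n U = map (\<lambda>i. i \<in> U) [0..<n]"

definition mob :: "nat \<Rightarrow> (bool list \<Rightarrow> 'a::comm_ring_1) \<Rightarrow> nat set \<Rightarrow> 'a" where
  "mob n F S = (\<Sum>U\<in>Pow S. (-1)^card (S-U) * F (pt n U))"

definition mmono :: "nat set \<Rightarrow> bool list \<Rightarrow> 'a::comm_ring_1" where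
  "mmono S x = (\<Prod>i\<in>S. of_bool (x!i))"

lemma prod_of_bool: "finite S \<Longrightarrow> (\<Prod>i\<in>S. of_bool (P i)) = (of_bool (\<forall>i\<in>S. P i) :: 'a::comm_ring_1)"
  by (induction S rule: finite_induct) auto

lemma mmono_eq: "finite S \<Longrightarrow> mmono S x = of_bool (\<forall>i\<in>S. x!i)"
  unfolding mmono_def by (rule prod_of_bool)

lemma mmono_pt: "S \<subseteq> {..<n} \<Longrightarrow> mmono S (pt n X) = of_bool (S \<subseteq> X)"
proof -
  assume a: "S \<subseteq> {..<n}"
  then have "finite S" by (meson finite_lessThan finite_subset)
  then show ?thesis using a by (auto simp: mmono_eq pt_def subset_iff)
qed

lemma signsum: "finite W \<Longrightarrow> (\<Sum>V\<in>Pow W. (-1::'a::comm_ring_1)^card V) = of_bool (W = {})"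
proof (induction W rule: finite_induct)
  case empty then show ?case by simp
next
  case (insert a W)
  have fin: "finite (Pow W)" using insert by simp
  have inj: "inj_on (insert a) (Pow W)" using insert.hyps(2) unfolding inj_on_def by (metis PowD insert_ident subsetD)
  have disj: "Pow W \<inter> insert a ` Pow W = {}" using insert by auto
  have "(\<Sum>V\<in>Pow (insert a W). (-1::'a)^card V) =
        (\<Sum>V\<in>Pow W. (-1::'a)^card V) + (\<Sum>V\<in>insert a ` Pow W. (-1::'a)^card V)"
    unfolding Pow_insert by (rule sum.union_disjoint) (use fin disj in auto)
  also have "(\<Sum>V\<in>insert a ` Pow W. (-1::'a)^card V) = (\<Sum>V\<in>Pow W. (-1::'a)^card (insert a V))"
    by (rule sum.reindex[OF inj, unfolded comp_def])
  also have "\<dots> = (\<Sum>V\<in>Pow W. - ((-1::'a)^card V))"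
  proof (rule sum.cong)
    fix V assume "V \<in> Pow W"
    then have "a \<notin> V" "finite V" using insert by (auto intro: finite_subset)
    then show "(-1::'a)^card (insert a V) = - ((-1)^card V)" by simp
  qed simp
  finally show ?case by (simp add: sum_negf)
qed

lemma L1:
  assumes "finite S" "T \<subseteq> S"
  shows "(\<Sum>U\<in>{U\<in>Pow S. T\<subseteq>U}. (-1::'a::comm_ring_1)^card (S-U)) = of_bool (T = S)"
proof -
  have e: "{U\<in>Pow S. T\<subseteq>U} = (\<lambda>V. S - V) ` Pow (S - T)" 
  proof
    show "{U\<in>Pow S. T\<subseteq>U} \<subseteq> (\<lambda>V. S - V) ` Pow (S - T)"
    proof
      fix U assume "U \<in> {U\<in>Pow S. T\<subseteq>U}"
      then have "U = S - (S - U)" "S - U \<in> Pow (S - T)" by auto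
      then show "U \<in> (\<lambda>V. S - V) ` Pow (S - T)" by blast
    qed
  qed (use assms in auto)
  have inj: "inj_on (\<lambda>V. S - V) (Pow (S - T))" unfolding inj_on_def by blast
  have "(\<Sum>U\<in>{U\<in>Pow S. T\<subseteq>U}. (-1::'a)^card (S-U)) = (\<Sum>V\<in>Pow (S-T). (-1::'a)^card (S - (S - V)))"
    unfolding e by (rule sum.reindex[OF inj, unfolded comp_def])
  also have "\<dots> = (\<Sum>V\<in>Pow (S-T). (-1::'a)^card V)"
  proof (rule sum.cong)
    fix V assume "V \<in> Pow (S-T)" then have "S - (S - V) = V" by auto
    then show "(-1::'a)^card (S - (S - V)) = (-1)^card V" by simp
  qed simp
  also have "\<dots> = of_bool (S - T = {})" using assms by (intro signsum) auto
  finally show ?thesis using assms by auto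
qed

lemma L1':
  assumes "finite X" "U \<subseteq> X"
  shows "(\<Sum>S\<in>{S\<in>Pow X. U\<subseteq>S}. (-1::'a::comm_ring_1)^card (S-U)) = of_bool (U = X)"
proof -
  have e: "{S\<in>Pow X. U\<subseteq>S} = (\<lambda>V. U \<union> V) ` Pow (X - U)" 
  proof
    show "{S\<in>Pow X. U\<subseteq>S} \<subseteq> (\<lambda>V. U \<union> V) ` Pow (X - U)"
    proof
      fix S assume "S \<in> {S\<in>Pow X. U\<subseteq>S}"
      then have "S = U \<union> (S - U)" "S - U \<in> Pow (X - U)" by auto
      then show "S \<in> (\<lambda>V. U \<union> V) ` Pow (X - U)" by blast
    qed
  qed (use assms in auto)
  have inj: "inj_on (\<lambda>V. U \<union> V) (Pow (X - U))" unfolding inj_on_def by blast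
  have "(\<Sum>S\<in>{S\<in>Pow X. U\<subseteq>S}. (-1::'a)^card (S-U)) = (\<Sum>V\<in>Pow (X-U). (-1::'a)^card ((U \<union> V) - U))"
    unfolding e by (rule sum.reindex[OF inj, unfolded comp_def])
  also have "\<dots> = (\<Sum>V\<in>Pow (X-U). (-1::'a)^card V)"
  proof (rule sum.cong)
    fix V assume "V \<in> Pow (X-U)" then have "(U \<union> V) - U = V" by auto
    then show "(-1::'a)^card ((U \<union> V) - U) = (-1)^card V" by simp
  qed simp
  also have "\<dots> = of_bool (X - U = {})" using assms by (intro signsum) auto
  finally show ?thesis using assms by auto
qed

lemma pt_of:
  assumes "length x = n" shows "x = pt n {i. i < n \<and> x!i}"
  using assms by (intro nth_equalityI) (auto simp: pt_def)

lemma M1: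
  fixes F :: "bool list \<Rightarrow> 'a::comm_ring_1"
  assumes "length x = n"
  shows "F x = (\<Sum>S\<in>Pow {..<n}. mob n F S * mmono S x)"
proof -
  define X where "X = {i. i < n \<and> x!i}"
  have xX: "x = pt n X" using pt_of[OF assms] X_def by simp
  have finX: "finite X" unfolding X_def by auto
  have "(\<Sum>S\<in>Pow {..<n}. mob n F S * mmono S x) = (\<Sum>S\<in>Pow {..<n}. if S \<subseteq> X then mob n F S else 0)"
    by (rule sum.cong) (auto simp: xX mmono_pt)
  also have "\<dots> = (\<Sum>S\<in>{S\<in>Pow {..<n}. S \<subseteq> X}. mob n F S)"
    by (rule sum.inter_filter[symmetric]) simp
  also have "{S\<in>Pow {..<n}. S \<subseteq> X} = Pow X" unfolding X_def by auto
  also have "(\<Sum>S\<in>Pow X. mob n F S) = (\<Sum>S\<in>Pow X. \<Sum>U\<in>{U. U \<in> Pow X \<and> U \<subseteq> S}. (-1)^card (S-U) * F (pt n U))"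
    unfolding mob_def by (rule sum.cong) (auto intro!: sum.cong)
  also have "\<dots> = (\<Sum>U\<in>Pow X. \<Sum>S\<in>{S. S \<in> Pow X \<and> U \<subseteq> S}. (-1)^card (S-U) * F (pt n U))"
    by (rule sum.swap_restrict) (use finX in auto)
  also have "\<dots> = (\<Sum>U\<in>Pow X. F (pt n U) * (\<Sum>S\<in>{S\<in>Pow X. U \<subseteq> S}. (-1)^card (S-U)))"
    by (simp add: sum_distrib_left mult.commute)
  also have "\<dots> = (\<Sum>U\<in>Pow X. F (pt n U) * of_bool (U = X))"
  proof (rule sum.cong)
    fix U assume "U \<in> Pow X"
    then show "F (pt n U) * (\<Sum>S\<in>{S\<in>Pow X. U \<subseteq> S}. (-1)^card (S-U)) = F (pt n U) * of_bool (U = X)"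
      by (subst L1'[OF finX]) auto
  qed simp
  also have "\<dots> = (\<Sum>U\<in>Pow X. if U = X then F (pt n X) else 0)"
    by (rule sum.cong) auto
  also have "\<dots> = F (pt n X)" using finX by simp
  finally show ?thesis using xX by simp
qed

lemma mob_cong: "(\<And>x. length x = n \<Longrightarrow> F x = G x) \<Longrightarrow> mob n F S = mob n G S"
  unfolding mob_def by (auto simp: pt_def intro!: sum.cong)

lemma M2:
  fixes c :: "nat set \<Rightarrow> 'a::comm_ring_1"
  assumes "S \<subseteq> {..<n}"
  shows "mob n (\<lambda>x. \<Sum>T\<in>Pow {..<n}. c T * mmono T x) S = c S"
proof -
  have finS: "finite S" using assms finite_subset by blast
  have "mob n (\<lambda>x. \<Sum>T\<in>Pow {..<n}. c T * mmono T x) S =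
     (\<Sum>U\<in>Pow S. \<Sum>T\<in>Pow {..<n}. (-1)^card (S-U) * (c T * of_bool (T \<subseteq> U)))"
    unfolding mob_def
  proof (rule sum.cong[OF refl])
    fix U assume U: "U \<in> Pow S"
    have h: "(\<Sum>T\<in>Pow {..<n}. c T * mmono T (pt n U)) = (\<Sum>T\<in>Pow {..<n}. c T * of_bool (T \<subseteq> U))"
      by (rule sum.cong) (auto simp: mmono_pt)
    show "(-1)^card (S-U) * (\<Sum>T\<in>Pow {..<n}. c T * mmono T (pt n U)) =
       (\<Sum>T\<in>Pow {..<n}. (-1)^card (S-U) * (c T * of_bool (T \<subseteq> U)))"
      by (simp only: h sum_distrib_left)
  qed
  also have "\<dots> = (\<Sum>T\<in>Pow {..<n}. \<Sum>U\<in>Pow S. (-1)^card (S-U) * (c T * of_bool (T \<subseteq> U)))"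
    by (rule sum.swap)
  also have "\<dots> = (\<Sum>T\<in>Pow {..<n}. c T * of_bool (T = S))"
  proof (rule sum.cong)
    fix T assume T: "T \<in> Pow {..<n}"
    have "(\<Sum>U\<in>Pow S. (-1)^card (S-U) * (c T * of_bool (T \<subseteq> U))) =
          c T * (\<Sum>U\<in>Pow S. if T \<subseteq> U then (-1)^card (S-U) else 0)"
      by (simp add: sum_distrib_left algebra_simps of_bool_def if_distrib cong: if_cong)
    also have "\<dots> = c T * (\<Sum>U\<in>{U\<in>Pow S. T \<subseteq> U}. (-1)^card (S-U))"
    proof -
      have hh: "(\<Sum>U\<in>{U\<in>Pow S. T \<subseteq> U}. (-1)^card (S-U)) = (\<Sum>U\<in>Pow S. if T \<subseteq> U then (-1::'a)^card (S-U) else 0)"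
        by (rule sum.inter_filter) (use finS in simp)
      show ?thesis by (simp only: hh)
    qed
    also have "\<dots> = c T * of_bool (T = S)"
    proof (cases "T \<subseteq> S")
      case True then show ?thesis by (subst L1[OF finS True]) (rule refl)
    next
      case False
      then have e: "{U\<in>Pow S. T \<subseteq> U} = {}" by auto
      have "T \<noteq> S" using False by auto
      then show ?thesis by (simp only: e sum.empty) simp
    qed
    finally show "(\<Sum>U\<in>Pow S. (-1)^card (S-U) * (c T * of_bool (T \<subseteq> U))) = c T * of_bool (T = S)" .
  qed simp
  also have "\<dots> = (\<Sum>T\<in>Pow {..<n}. if T = S then c S else 0)"
    by (rule sum.cong) auto
  also have "\<dots> = c S" using assms by simp
  finally show ?thesis .
qed



definition cp :: "constraint \<Rightarrow> nat set \<Rightarrow> rat" where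
  "cp h S = mob (ar h) (\<lambda>x. of_bool (cfun h x)) S"

lemma of_rat_of_bool': "of_rat (of_bool b) = (of_bool b :: 'a::field_char_0)" by (cases b) auto

lemma mob_real_rat:
  "mob n (\<lambda>x. of_bool (cfun h x) :: real) S = of_rat (mob n (\<lambda>x. of_bool (cfun h x) :: rat) S)"
  unfolding mob_def by (simp add: of_rat_sum of_rat_mult of_rat_power of_rat_of_bool')

lemma char_poly_eq:
  "char_poly h = (\<lambda>S. if S \<subseteq> {..<ar h} then mob (ar h) (\<lambda>x. of_bool (cfun h x) :: real) S else 0)"
  unfolding char_poly_def
proof (rule the_equality)
  let ?c = "\<lambda>S. if S \<subseteq> {..<ar h} then mob (ar h) (\<lambda>x. of_bool (cfun h x) :: real) S else 0"
  show "is_char_poly h ?c"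
    unfolding is_char_poly_def
  proof (intro conjI allI impI)
    fix x :: "bool list" assume "length x = ar h"
    then have "(of_bool (cfun h x) :: real) = (\<Sum>S\<in>Pow {..<ar h}. mob (ar h) (\<lambda>x. of_bool (cfun h x) :: real) S * mmono S x)"
      by (rule M1)
    also have "\<dots> = (\<Sum>S\<in>Pow {..<ar h}. ?c S * (\<Prod>i\<in>S. of_bool (x ! i)))"
      by (rule sum.cong) (auto simp: mmono_def)
    finally show "(of_bool (cfun h x) :: real) = (\<Sum>S\<in>Pow {..<ar h}. ?c S * (\<Prod>i\<in>S. of_bool (x ! i)))" .
  qed simp
  fix c assume c: "is_char_poly h c"
  show "c = ?c"
  proof
    fix S show "c S = ?c S"
    proof (cases "S \<subseteq> {..<ar h}")
      case True
      have "c S = mob (ar h) (\<lambda>x. \<Sum>T\<in>Pow {..<ar h}. c T * mmono T x) S"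
        by (rule M2[OF True, symmetric])
      also have "\<dots> = mob (ar h) (\<lambda>x. of_bool (cfun h x) :: real) S"
        by (rule mob_cong) (use c in \<open>auto simp: is_char_poly_def mmono_def\<close>)
      finally show ?thesis using True by simp
    next
      case False then show ?thesis using c by (simp add: is_char_poly_def)
    qed
  qed
qed

lemma char_poly_cp: "char_poly h S = (if S \<subseteq> {..<ar h} then of_rat (cp h S) else 0)"
  by (simp add: char_poly_eq cp_def mob_real_rat)

lemma fin_K: "finite (card ` {S. char_poly h S \<noteq> 0})"
proof -
  have "{S. char_poly h S \<noteq> 0} \<subseteq> Pow {..<ar h}" by (auto simp: char_poly_cp split: if_splits)
  then show ?thesis by (meson finite_Pow_iff finite_imageI finite_lessThan finite_subset)
qed

lemma D1: assumes "S \<subseteq> {..<ar h}" "cp h S \<noteq> 0" shows "card S \<le> deg h"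
proof -
  have "char_poly h S \<noteq> 0" using assms by (simp add: char_poly_cp)
  then have "card S \<in> {0} \<union> card ` {S. char_poly h S \<noteq> 0}" by auto
  then show ?thesis unfolding deg_def by (intro Max_ge) (use fin_K in auto)
qed

lemma D2: assumes "\<not> trivial f" shows "\<exists>T. T \<subseteq> {..<ar f} \<and> cp f T \<noteq> 0 \<and> card T = deg f"
proof -
  have "\<exists>S. S \<subseteq> {..<ar f} \<and> cp f S \<noteq> 0"
  proof (rule ccontr)
    assume "\<not> ?thesis"
    then have z: "\<And>S. S \<subseteq> {..<ar f} \<Longrightarrow> cp f S = 0" by auto
    have "\<forall>x. length x = ar f \<longrightarrow> cfun f x = False"
    proof (intro allI impI)
      fix x :: "bool list" assume "length x = ar f"
      then have "(of_bool (cfun f x) :: rat) = (\<Sum>S\<in>Pow {..<ar f}. mob (ar f) (\<lambda>x. of_bool (cfun f x)) S * mmono S x)"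
        by (rule M1)
      also have "\<dots> = 0" using z by (auto simp: cp_def intro!: sum.neutral)
      finally show "cfun f x = False" by simp
    qed
    then show False using assms unfolding trivial_def by blast
  qed
  then obtain S0 where S0: "S0 \<subseteq> {..<ar f}" "cp f S0 \<noteq> 0" by blast
  have le: "card S0 \<le> deg f" by (rule D1[OF S0])
  show ?thesis
  proof (cases "deg f = 0")
    case True
    then have "S0 = {}" using le S0(1) by (metis card_0_eq finite_lessThan finite_subset le_zero_eq)
    then show ?thesis using S0 True by auto
  next
    case False
    have "deg f \<in> {0} \<union> card ` {S. char_poly f S \<noteq> 0}" unfolding deg_def
      by (rule Max_in) (use fin_K in auto)
    then obtain T where "char_poly f T \<noteq> 0" "card T = deg f" using False by auto
    then show ?thesis by (auto simp: char_poly_cp split: if_splits)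
  qed
qed



definition sub :: "bool list \<Rightarrow> nat + bool \<Rightarrow> bool" where
  "sub x e = (case e of Inl i \<Rightarrow> x ! i | Inr b \<Rightarrow> b)"
definition gadget :: "constraint \<Rightarrow> (nat + bool) list \<Rightarrow> bool list \<Rightarrow> rat" where
  "gadget f \<xi> x = of_bool (cfun f (map (sub x) \<xi>))"
definition okx :: "constraint \<Rightarrow> nat \<Rightarrow> (nat + bool) list \<Rightarrow> bool" where
  "okx f n \<xi> \<longleftrightarrow> length \<xi> = ar f \<and> (\<forall>i. Inl i \<in> set \<xi> \<longrightarrow> i < n)"
definition rep :: "constraint \<Rightarrow> nat \<Rightarrow> (bool list \<Rightarrow> rat) \<Rightarrow> bool" where
  "rep f n F \<longleftrightarrow> (\<exists>L. (\<forall>p\<in>set L. okx f n (snd p)) \<and>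
      (\<forall>x. length x = n \<longrightarrow> F x = (\<Sum>p\<leftarrow>L. fst p * gadget f (snd p) x)))"

lemma rep_gadget: "okx f n \<xi> \<Longrightarrow> rep f n (gadget f \<xi>)"
  unfolding rep_def by (rule exI[of _ "[(1, \<xi>)]"]) auto

lemma rep_zero: "rep f n (\<lambda>x. 0)"
  unfolding rep_def by (rule exI[of _ "[]"]) auto

lemma rep_add: "rep f n F \<Longrightarrow> rep f n G \<Longrightarrow> rep f n (\<lambda>x. F x + G x)"
  unfolding rep_def
proof (elim exE conjE)
  fix L1 L2 assume a: "\<forall>p\<in>set L1. okx f n (snd p)" "\<forall>x. length x = n \<longrightarrow> F x = (\<Sum>p\<leftarrow>L1. fst p * gadget f (snd p) x)"
    "\<forall>p\<in>set L2. okx f n (snd p)" "\<forall>x. length x = n \<longrightarrow> G x = (\<Sum>p\<leftarrow>L2. fst p * gadget f (snd p) x)"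
  show "\<exists>L. (\<forall>p\<in>set L. okx f n (snd p)) \<and> (\<forall>x. length x = n \<longrightarrow> F x + G x = (\<Sum>p\<leftarrow>L. fst p * gadget f (snd p) x))"
    by (rule exI[of _ "L1 @ L2"]) (use a in auto)
qed

lemma rep_scale: "rep f n F \<Longrightarrow> rep f n (\<lambda>x. a * F x)"
  unfolding rep_def
proof (elim exE conjE)
  fix L assume l: "\<forall>p\<in>set L. okx f n (snd p)" "\<forall>x. length x = n \<longrightarrow> F x = (\<Sum>p\<leftarrow>L. fst p * gadget f (snd p) x)"
  have e: "a * (\<Sum>p\<leftarrow>L. fst p * gadget f (snd p) x) = (\<Sum>p\<leftarrow>map (\<lambda>p. (a * fst p, snd p)) L. fst p * gadget f (snd p) x)" for x
    by (induction L) (auto simp: algebra_simps)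
  show "\<exists>L. (\<forall>p\<in>set L. okx f n (snd p)) \<and> (\<forall>x. length x = n \<longrightarrow> a * F x = (\<Sum>p\<leftarrow>L. fst p * gadget f (snd p) x))"
    by (rule exI[of _ "map (\<lambda>p. (a * fst p, snd p)) L"]) (use l e in auto)
qed

lemma rep_cong: "rep f n F \<Longrightarrow> (\<And>x. length x = n \<Longrightarrow> G x = F x) \<Longrightarrow> rep f n G"
  unfolding rep_def by auto

lemma rep_sum: "finite I \<Longrightarrow> (\<And>i. i \<in> I \<Longrightarrow> rep f n (h i)) \<Longrightarrow> rep f n (\<lambda>x. \<Sum>i\<in>I. h i x)"
proof (induction I rule: finite_induct)
  case empty then show ?case by (simp add: rep_zero)
next
  case (insert a I)
  have "rep f n (\<lambda>x. h a x + (\<Sum>i\<in>I. h i x))" by (rule rep_add) (use insert in auto)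
  then show ?case using insert by simp
qed

lemma IL: assumes "finite Z"
  shows "(\<Sum>B\<in>Pow Z. (-1::'a::comm_ring_1)^card (Z-B) * of_bool (V \<subseteq> B)) = of_bool (V = Z)"
proof -
  have "(\<Sum>B\<in>Pow Z. (-1::'a)^card (Z-B) * of_bool (V \<subseteq> B)) = (\<Sum>B\<in>Pow Z. if V \<subseteq> B then (-1::'a)^card (Z-B) else 0)"
    by (rule sum.cong) auto
  also have "\<dots> = (\<Sum>B\<in>{B\<in>Pow Z. V \<subseteq> B}. (-1::'a)^card (Z-B))"
    by (rule sum.inter_filter[symmetric]) (use assms in simp)
  also have "\<dots> = of_bool (V = Z)"
  proof (cases "V \<subseteq> Z")
    case True then show ?thesis by (rule L1[OF assms])
  next
    case False
    then have e: "{B\<in>Pow Z. V \<subseteq> B} = {}" by auto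
    have "V \<noteq> Z" using False by auto
    then show ?thesis by (simp only: e sum.empty) simp
  qed
  finally show ?thesis .
qed

lemma Qcomp:
  assumes "T1 \<subseteq> T" "T \<subseteq> {..<ar f}" "Z = T - T1"
  shows "(\<Sum>B\<in>Pow Z. (-1)^card (Z-B) * (of_bool (cfun f (map (\<lambda>p. if p \<in> T1 then x!(\<phi> p) else p \<in> B) [0..<ar f])) :: rat))
    = (\<Sum>U\<in>Pow {..<ar f}. cp f U * of_bool (U - T1 = Z) * of_bool (\<forall>p\<in>U \<inter> T1. x!(\<phi> p)))"
proof -
  let ?m = "ar f"
  have finZ: "finite Z" using assms by (metis finite_Diff finite_lessThan finite_subset)
  let ?a = "\<lambda>U. (of_bool (\<forall>p\<in>U \<inter> T1. x!(\<phi> p)) :: rat)"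
  let ?b = "\<lambda>U B. (of_bool (U - T1 \<subseteq> B) :: rat)"
  have step1: "(of_bool (cfun f (map (\<lambda>p. if p \<in> T1 then x!(\<phi> p) else p \<in> B) [0..<?m])) :: rat)
     = (\<Sum>U\<in>Pow {..<?m}. cp f U * (?a U * ?b U B))" for B
  proof -
    let ?y = "map (\<lambda>p. if p \<in> T1 then x!(\<phi> p) else p \<in> B) [0..<?m]"
    have "(of_bool (cfun f ?y) :: rat) = (\<Sum>U\<in>Pow {..<?m}. mob ?m (\<lambda>x. of_bool (cfun f x)) U * mmono U ?y)"
      by (rule M1) simp
    also have "\<dots> = (\<Sum>U\<in>Pow {..<?m}. cp f U * (?a U * ?b U B))"
    proof (rule sum.cong)
      fix U assume U: "U \<in> Pow {..<?m}"
      then have fU: "finite U" by (meson PowD finite_lessThan finite_subset)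
      have "mmono U ?y = (of_bool (\<forall>p\<in>U. ?y ! p) :: rat)" by (rule mmono_eq[OF fU])
      also have "(\<forall>p\<in>U. ?y ! p) \<longleftrightarrow> (\<forall>p\<in>U. if p \<in> T1 then x!(\<phi> p) else p \<in> B)"
      proof -
        have "\<forall>p\<in>U. ?y ! p = (if p \<in> T1 then x!(\<phi> p) else p \<in> B)" using U by auto
        then show ?thesis by (metis (no_types, lifting))
      qed
      also have "\<dots> \<longleftrightarrow> (\<forall>p\<in>U \<inter> T1. x!(\<phi> p)) \<and> U - T1 \<subseteq> B" by auto
      finally show "mob ?m (\<lambda>x. of_bool (cfun f x)) U * mmono U ?y = cp f U * (?a U * ?b U B)"
        by (simp add: cp_def)
    qed simp
    finally show ?thesis .
  qed
  have "(\<Sum>B\<in>Pow Z. (-1)^card (Z-B) * (of_bool (cfun f (map (\<lambda>p. if p \<in> T1 then x!(\<phi> p) else p \<in> B) [0..<ar f])) :: rat))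
      = (\<Sum>B\<in>Pow Z. \<Sum>U\<in>Pow {..<?m}. (-1)^card (Z-B) * (cp f U * (?a U * ?b U B)))"
    by (simp only: step1 sum_distrib_left)
  also have "\<dots> = (\<Sum>U\<in>Pow {..<?m}. \<Sum>B\<in>Pow Z. (-1)^card (Z-B) * (cp f U * (?a U * ?b U B)))"
    by (rule sum.swap)
  also have "\<dots> = (\<Sum>U\<in>Pow {..<?m}. cp f U * ?a U * (\<Sum>B\<in>Pow Z. (-1)^card (Z-B) * ?b U B))"
    by (simp add: sum_distrib_left algebra_simps)
  also have "\<dots> = (\<Sum>U\<in>Pow {..<ar f}. cp f U * of_bool (U - T1 = Z) * ?a U)"
    by (simp only: IL[OF finZ]) (simp add: algebra_simps)
  finally show ?thesis .
qed



lemma rep_mono_aux: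
  assumes T: "T \<subseteq> {..<ar f}" "cp f T \<noteq> 0"
  shows "\<forall>S. S \<subseteq> {..<n} \<longrightarrow> card S = k \<longrightarrow> k \<le> card T \<longrightarrow> rep f n (mmono S)"
proof (induction k rule: less_induct)
  case (less k)
  show ?case
  proof (intro allI impI)
    fix S :: "nat set" assume S: "S \<subseteq> {..<n}" "card S = k" "k \<le> card T"
    have finT: "finite T" using T(1) by (meson finite_lessThan finite_subset)
    have finS: "finite S" using S(1) by (meson finite_lessThan finite_subset)
    obtain T1 where T1: "T1 \<subseteq> T" "card T1 = k" "finite T1"
      using obtain_subset_with_card_n[OF S(3)] by blast
    obtain \<phi> where phi: "bij_betw \<phi> T1 S" using finite_same_card_bij[OF T1(3) finS] T1(2) S(2) by auto
    define Z where "Z = T - T1"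
    define \<xi> where "\<xi> B = map (\<lambda>p. if p \<in> T1 then Inl (\<phi> p) else Inr (p \<in> B)) [0..<ar f]" for B :: "nat set"
    define Q where "Q x = (\<Sum>B\<in>Pow Z. (-1)^card (Z-B) * gadget f (\<xi> B) x)" for x
    have finZ: "finite Z" unfolding Z_def using finT by simp
    have okx: "okx f n (\<xi> B)" for B
      unfolding okx_def \<xi>_def
    proof (intro conjI allI impI)
      fix i assume "Inl i \<in> set (map (\<lambda>p. if p \<in> T1 then Inl (\<phi> p) else Inr (p \<in> B)) [0..<ar f])"
      then obtain p where "p \<in> T1" "i = \<phi> p" by (auto split: if_splits)
      then have "i \<in> S" using phi by (auto simp: bij_betw_def)
      then show "i < n" using S(1) by auto
    qed simp
    have repQ: "rep f n Q" unfolding Q_def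
      by (rule rep_sum[where h="\<lambda>B x. (-1)^card (Z-B) * gadget f (\<xi> B) x"]) (use finZ in \<open>auto intro: rep_scale rep_gadget okx\<close>)
    define t where "t U x = cp f U * of_bool (U - T1 = Z) * (mmono (\<phi> ` (U \<inter> T1)) x :: rat)" for U x
    have Qeq: "Q x = (\<Sum>U\<in>Pow {..<ar f}. t U x)" for x
    proof -
      have g: "gadget f (\<xi> B) x = of_bool (cfun f (map (\<lambda>p. if p \<in> T1 then x!(\<phi> p) else p \<in> B) [0..<ar f]))" for B
        unfolding gadget_def \<xi>_def by (simp add: sub_def comp_def if_distrib cong: if_cong)
      have "Q x = (\<Sum>U\<in>Pow {..<ar f}. cp f U * of_bool (U - T1 = Z) * of_bool (\<forall>p\<in>U \<inter> T1. x!(\<phi> p)))"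
        unfolding Q_def g by (rule Qcomp[OF T1(1) T(1) Z_def])
      also have "\<dots> = (\<Sum>U\<in>Pow {..<ar f}. t U x)"
      proof (rule sum.cong)
        fix U assume "U \<in> Pow {..<ar f}"
        have "finite (\<phi> ` (U \<inter> T1))" using T1(3) by simp
        then show "cp f U * of_bool (U - T1 = Z) * of_bool (\<forall>p\<in>U \<inter> T1. x!(\<phi> p)) = t U x"
          unfolding t_def by (simp add: mmono_eq)
      qed simp
      finally show ?thesis .
    qed
    have TinP: "T \<in> Pow {..<ar f}" using T(1) by simp
    have tT: "t T x = cp f T * mmono S x" for x
    proof -
      have "T - T1 = Z" unfolding Z_def ..
      moreover have "\<phi> ` (T \<inter> T1) = S" using phi T1(1) by (auto simp: bij_betw_def Int_absorb1)
      ultimately show ?thesis unfolding t_def by simp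
    qed
    define R where "R x = (\<Sum>U\<in>Pow {..<ar f} - {T}. t U x)" for x
    have QR: "Q x = cp f T * mmono S x + R x" for x
      unfolding Qeq R_def using sum.remove[OF _ TinP, of "\<lambda>U. t U x"] tT by simp
    have repR: "rep f n R" unfolding R_def
    proof (rule rep_sum[where h=t])
      fix U assume U: "U \<in> Pow {..<ar f} - {T}"
      show "rep f n (t U)"
      proof (cases "U - T1 = Z")
        case False
        show ?thesis by (rule rep_cong[OF rep_zero]) (simp add: t_def False)
      next
        case True
        have "U \<inter> T1 \<noteq> T1"
        proof
          assume "U \<inter> T1 = T1"
          then have "U = (U - T1) \<union> T1" by auto
          then have "U = T" using True T1(1) unfolding Z_def by auto
          then show False using U by auto
        qed
        then have ps: "U \<inter> T1 \<subset> T1" by auto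
        have "card (\<phi> ` (U \<inter> T1)) = card (U \<inter> T1)"
          by (rule card_image) (use phi in \<open>auto simp: bij_betw_def intro: inj_on_subset\<close>)
        also have "\<dots> < card T1" by (rule psubset_card_mono[OF T1(3) ps])
        finally have lt: "card (\<phi> ` (U \<inter> T1)) < k" using T1(2) by simp
        have sub: "\<phi> ` (U \<inter> T1) \<subseteq> {..<n}" using phi S(1) by (auto simp: bij_betw_def)
        have "rep f n (mmono (\<phi> ` (U \<inter> T1)))"
          using less.IH[OF lt] sub lt S(3) by auto
        then have "rep f n (\<lambda>x. (cp f U * of_bool (U - T1 = Z)) * mmono (\<phi> ` (U \<inter> T1)) x)"
          by (rule rep_scale)
        then show ?thesis unfolding t_def .
      qed
    qed simp
    have "rep f n (\<lambda>x. (1 / cp f T) * (Q x + (-1) * R x))"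
      by (intro rep_scale rep_add repQ repR)
    then show "rep f n (mmono S)"
      by (rule rep_cong) (use T(2) in \<open>simp add: QR\<close>)
  qed
qed



lemma sub_eq: "sub x = (\<lambda>e. case e of Inl i \<Rightarrow> x!i | Inr b \<Rightarrow> b)"
  by (rule ext) (simp add: sub_def)

theorem proposition16:
  fixes g f :: constraint
  assumes "\<not> trivial f" and "deg g \<le> deg f"
  shows "\<exists>(M::nat) (fs :: nat \<Rightarrow> constraint) (js :: nat \<Rightarrow> nat list) (\<alpha> :: nat \<Rightarrow> rat).
           (\<forall>i<M. expressible (fs i) f \<and> length (js i) = ar (fs i) \<and>
                   set (js i) \<subseteq> {..<ar g}) \<and>
           (\<forall>x. length x = ar g \<longrightarrow>
              (of_bool (cfun g x) :: rat) =
                (\<Sum>i<M. \<alpha> i * of_bool (cfun (fs i) (map (\<lambda>j. x ! j) (js i)))))"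
proof -
  let ?n = "ar g"
  obtain T where T: "T \<subseteq> {..<ar f}" "cp f T \<noteq> 0" "card T = deg f" using D2[OF assms(1)] by blast
  have repm: "rep f ?n (mmono S)" if "S \<subseteq> {..<?n}" "card S \<le> deg f" for S
    using rep_mono_aux[OF T(1,2), of ?n "card S"] that T(3) by auto
  have "rep f ?n (\<lambda>x. \<Sum>S\<in>Pow {..<?n}. cp g S * mmono S x)"
  proof (rule rep_sum[where h="\<lambda>S x. cp g S * mmono S x"])
    fix S assume S: "S \<in> Pow {..<?n}"
    show "rep f ?n (\<lambda>x. cp g S * mmono S x)"
    proof (cases "cp g S = 0")
      case True then show ?thesis by (intro rep_cong[OF rep_zero]) simp
    next
      case False
      then have "card S \<le> deg g" using S D1 by auto
      then show ?thesis using S assms(2) by (intro rep_scale repm) auto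
    qed
  qed simp
  then have "rep f ?n (\<lambda>x. of_bool (cfun g x))"
    by (rule rep_cong) (unfold cp_def, erule M1)
  then obtain L where L: "\<forall>p\<in>set L. okx f ?n (snd p)"
     "\<forall>x. length x = ?n \<longrightarrow> (of_bool (cfun g x) :: rat) = (\<Sum>p\<leftarrow>L. fst p * gadget f (snd p) x)"
    unfolding rep_def by blast
  define fs where "fs i = (?n, \<lambda>x. cfun f (map (sub x) (snd (L ! i))))" for i
  define js :: "nat \<Rightarrow> nat list" where "js i = [0..<?n]" for i
  define \<alpha> where "\<alpha> i = fst (L ! i)" for i
  show ?thesis
  proof (intro exI conjI allI impI)
    fix i assume i: "i < length L"
    then have ok: "okx f ?n (snd (L ! i))" using L(1) by auto
    show "expressible (fs i) f" unfolding expressible_def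
      by (rule exI[of _ "snd (L ! i)"]) (use ok in \<open>auto simp: okx_def fs_def ar_def cfun_def sub_eq\<close>)
    show "length (js i) = ar (fs i)" by (simp add: js_def fs_def ar_def)
    show "set (js i) \<subseteq> {..<?n}" by (auto simp: js_def)
  next
    fix x :: "bool list" assume x: "length x = ?n"
    have "(of_bool (cfun g x) :: rat) = (\<Sum>p\<leftarrow>L. fst p * gadget f (snd p) x)" using L(2) x by auto
    also have "\<dots> = (\<Sum>i = 0..<length L. fst (L!i) * gadget f (snd (L!i)) x)"
      by (simp add: sum_list_sum_nth)
    also have "\<dots> = (\<Sum>i<length L. \<alpha> i * of_bool (cfun (fs i) (map (\<lambda>j. x ! j) (js i))))"
    proof -
      have m: "map (\<lambda>j. x ! j) [0..<?n] = x" using x map_nth[of x] by simp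
      show ?thesis
        by (simp add: atLeast0LessThan \<alpha>_def gadget_def fs_def js_def cfun_def m)
    qed
    finally show "(of_bool (cfun g x) :: rat) = (\<Sum>i<length L. \<alpha> i * of_bool (cfun (fs i) (map (\<lambda>j. x ! j) (js i))))" .
  qed
qed

end
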